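(* Let $K\le M$, $S\ge 1$, $\sigma^2>0$, and $\mathrm{EVM}\in(0,1]$. For $\nu=0,\ldots,S-1$ let $\bar{\mathbf{H}}[\nu]\in\mathbb{C}^{M\times K}$ have rank $K$. For $\rho>0$ define $$R_{\Sigma}(\rho)=\frac{1}{S}\sum_{\nu=0}^{S-1}\log_2\det\left(\mathbf{I}_M+\frac{\rho}{\sigma^2}\bar{\mathbf{H}}[\nu]\bar{\mathbf{H}}^{\mathrm{H}}[\nu]\right)-\frac{1}{S}\sum_{\nu=0}^{S-1}\log_2\det\left(\mathbf{I}_M+\frac{\rho\,\mathrm{EVM}^2}{\sigma^2}\bar{\mathbf{H}}[\nu]\bar{\mathbf{H}}^{\mathrm{H}}[\nu]\right).$$ Then $$\lim_{\rho\to\infty}R_{\Sigma}(\rho)=K\log_2\left(\frac{1}{\mathrm{EVM}^2}\right).$$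
   Context: $(\cdot)^{\mathrm{H}}$ denotes conjugate transpose and $\mathbf{I}_M$ the $M\times M$ identity matrix. In the paper, $R_\Sigma$ is the achievable uplink average sum rate of a multi-user MIMO OFDM system with $K$ users, $M$ base-station antennas, $S$ subcarriers, channel matrices $\bar{\mathbf{H}}[\nu]$, transmit power $\rho$, noise variance $\sigma^2$ and user hardware error vector magnitude $\mathrm{EVM}$. *)

theory Defs
  imports "HOL-Analysis.Analysis"
begin

definition cnj_transpose :: "complex^'k^'m \<Rightarrow> complex^'m^'k" where
  "cnj_transpose A = (\<chi> i j. cnj (A $ j $ i))"

text \<open>log2 det(I_M + c H H^H); the determinant is real (Hermitian PSD argument),
  so we take its real part.\<close>
definition log2det :: "real \<Rightarrow> complex^'k^'m \<Rightarrow> real" where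
  "log2det c H = log 2 (Re (det (mat 1 + c *\<^sub>R (H ** cnj_transpose H))))"

definition sum_rate ::
  "(nat \<Rightarrow> complex^'k^'m) \<Rightarrow> nat \<Rightarrow> real \<Rightarrow> real \<Rightarrow> real \<Rightarrow> real" where
  "sum_rate H S \<sigma>2 EVM \<rho> =
     (1 / real S) * (\<Sum>\<nu><S. log2det (\<rho> / \<sigma>2) (H \<nu>))
   - (1 / real S) * (\<Sum>\<nu><S. log2det (\<rho> * EVM\<^sup>2 / \<sigma>2) (H \<nu>))"

end

theory Submission
  imports Defs
begin


lemma det_cnj_transpose:
  fixes A :: "complex^'n^'n"
  shows "det (cnj_transpose A) = cnj (det A)"
proof -
  have "cnj_transpose A = transpose (\<chi> i j. cnj (A $ i $ j))"
    by (simp add: cnj_transpose_def transpose_def)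
  then have "det (cnj_transpose A) = det (\<chi> i j. cnj (A $ i $ j))" by simp
  also have "\<dots> = cnj (det A)"
    unfolding det_def by (simp add: cnj_sum cnj_prod)
  finally show ?thesis .
qed

lemma ct_ct [simp]: "cnj_transpose (cnj_transpose A) = A"
  by (simp add: cnj_transpose_def vec_eq_iff)

lemma quad_form:
  fixes B :: "complex^'a^'b" and x :: "complex^'a"
  shows "(\<Sum>i\<in>UNIV. cnj (x$i) * ((cnj_transpose B ** B) *v x)$i)
         = (\<Sum>l\<in>UNIV. cnj ((B *v x)$l) * (B *v x)$l)"
proof -
  have "(\<Sum>i\<in>UNIV. cnj (x$i) * ((cnj_transpose B ** B) *v x)$i)
     = (\<Sum>i\<in>UNIV. \<Sum>j\<in>UNIV. \<Sum>l\<in>UNIV. cnj (B$l$i * x$i) * (B$l$j * x$j))"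
    unfolding matrix_vector_mult_def matrix_matrix_mult_def cnj_transpose_def
    apply (simp add: sum_distrib_left sum_distrib_right)
    apply (intro sum.cong refl)
    apply (simp add: mult_ac)
    done
  also have "\<dots> = (\<Sum>i\<in>UNIV. \<Sum>l\<in>UNIV. \<Sum>j\<in>UNIV. cnj (B$l$i * x$i) * (B$l$j * x$j))"
    by (intro sum.cong refl) (rule sum.swap)
  also have "\<dots> = (\<Sum>l\<in>UNIV. \<Sum>i\<in>UNIV. \<Sum>j\<in>UNIV. cnj (B$l$i * x$i) * (B$l$j * x$j))"
    by (rule sum.swap)
  also have "\<dots> = (\<Sum>l\<in>UNIV. (\<Sum>i\<in>UNIV. cnj (B$l$i * x$i)) * (\<Sum>j\<in>UNIV. B$l$j * x$j))"
    by (simp only: sum_product)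
  also have "\<dots> = (\<Sum>l\<in>UNIV. cnj ((B *v x)$l) * (B *v x)$l)"
    by (simp add: matrix_vector_mult_def cnj_sum)
  finally show ?thesis .
qed

definition nsq :: "complex^'a \<Rightarrow> real" where
  "nsq y = (\<Sum>l\<in>UNIV. (cmod (y$l))^2)"

lemma nsq_eq: "(\<Sum>l\<in>UNIV. cnj (y$l) * y$l) = complex_of_real (nsq y)"
  unfolding nsq_def of_real_sum by (intro sum.cong refl) (metis complex_norm_square mult.commute of_real_power)

lemma nsq_nonneg: "nsq y \<ge> 0"
  unfolding nsq_def by (intro sum_nonneg) auto

lemma nsq_zero: "nsq y = 0 \<Longrightarrow> y = 0"
  unfolding nsq_def by (subst (asm) sum_nonneg_eq_0_iff) (auto simp: vec_eq_iff)

lemma mv_IplusM: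
  fixes M :: "complex^'n^'n"
  shows "((mat 1 + t *\<^sub>R M) *v x) $ i = x$i + complex_of_real t * (M *v x)$i"
  apply (simp add: matrix_vector_mult_def mat_def vector_add_component vector_scaleR_component)
  apply (simp add: scaleR_conv_of_real distrib_left sum.distrib sum_distrib_left mult_ac)
  apply (simp add: mult.commute[of "x$_"] if_distrib cong: if_cong)
  done

lemma inj_IplusHH:
  fixes H :: "complex^'k^'m"
  assumes t: "t \<ge> 0" and x: "(mat 1 + t *\<^sub>R (H ** cnj_transpose H)) *v x = 0"
  shows "x = 0"
proof -
  let ?y = "cnj_transpose H *v x"
  have "0 = (\<Sum>i\<in>UNIV. cnj (x$i) * ((mat 1 + t *\<^sub>R (H ** cnj_transpose H)) *v x)$i)"
    using x by simp
  also have "\<dots> = (\<Sum>i\<in>UNIV. cnj (x$i) * x$i)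
      + complex_of_real t * (\<Sum>i\<in>UNIV. cnj (x$i) * ((cnj_transpose (cnj_transpose H) ** cnj_transpose H) *v x)$i)"
    unfolding mv_IplusM by (simp add: algebra_simps sum.distrib sum_distrib_left)
  also have "\<dots> = complex_of_real (nsq x + t * nsq ?y)"
    unfolding quad_form nsq_eq by simp
  finally have "nsq x + t * nsq ?y = 0" by (metis of_real_eq_0_iff)
  moreover have "nsq x \<ge> 0" "t * nsq ?y \<ge> 0" using t nsq_nonneg by (auto intro: mult_nonneg_nonneg)
  ultimately have "nsq x = 0" by linarith
  then show ?thesis by (rule nsq_zero)
qed

lemma det_ne0_of_inj:
  fixes A :: "'a::field^'n^'n"
  assumes "\<And>x. A *v x = 0 \<Longrightarrow> x = 0"
  shows "det A \<noteq> 0"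
  using assms invertible_det_nz invertible_left_inverse matrix_left_invertible_ker by blast

lemma det_tendsto:
  fixes A :: "'b \<Rightarrow> 'a::{real_normed_field}^'n^'n"
  assumes "\<And>i j. ((\<lambda>t. A t $ i $ j) \<longlongrightarrow> B $ i $ j) F"
  shows "((\<lambda>t. det (A t)) \<longlongrightarrow> det B) F"
  unfolding det_def by (intro tendsto_intros assms)

lemma det_IplusHH_real:
  fixes H :: "complex^'k^'m"
  shows "Im (det (mat 1 + t *\<^sub>R (H ** cnj_transpose H))) = 0"
proof -
  let ?A = "mat 1 + t *\<^sub>R (H ** cnj_transpose H)"
  have "cnj_transpose ?A = ?A"
    by (simp add: cnj_transpose_def vec_eq_iff mat_def matrix_matrix_mult_def cnj_sum mult.commute)
  then have "cnj (det ?A) = det ?A" using det_cnj_transpose[of ?A] by simp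
  then show ?thesis by (metis Reals_cnj_iff complex_is_Real_iff)
qed

lemma det_IplusHH_pos:
  fixes H :: "complex^'k^'m"
  assumes "c \<ge> 0"
  shows "Re (det (mat 1 + c *\<^sub>R (H ** cnj_transpose H))) > 0"
proof -
  define g where "g t = Re (det (mat 1 + t *\<^sub>R (H ** cnj_transpose H)))" for t
  have ne: "g t \<noteq> 0" if "t \<ge> 0" for t
  proof
    assume "g t = 0"
    then have "det (mat 1 + t *\<^sub>R (H ** cnj_transpose H)) = 0"
      using det_IplusHH_real[of t H] unfolding g_def by (simp add: complex_eq_iff)
    moreover have "det (mat 1 + t *\<^sub>R (H ** cnj_transpose H)) \<noteq> 0"
      by (rule det_ne0_of_inj) (rule inj_IplusHH[OF that])
    ultimately show False by simp
  qed
  have cont: "isCont g t" for t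
  proof -
    have "((\<lambda>s. det (mat 1 + s *\<^sub>R (H ** cnj_transpose H))) \<longlongrightarrow> det (mat 1 + t *\<^sub>R (H ** cnj_transpose H))) (at t)"
      by (rule det_tendsto) (auto intro!: tendsto_intros)
    then show ?thesis unfolding g_def isCont_def by (intro tendsto_intros)
  qed
  have g0: "g 0 = 1" by (simp add: g_def)
  show ?thesis
  proof (rule ccontr)
    assume "\<not> ?thesis"
    then have "g c \<le> 0" unfolding g_def by simp
    then have "\<exists>s. 0 \<le> s \<and> s \<le> c \<and> g s = 0"
      using g0 cont assms by (intro IVT2) simp_all
    then obtain s where "0 \<le> s" "g s = 0" by blast
    then show False using ne[of s] by simp
  qed
qed



lemma rank_full_inj:
  fixes H :: "'a::field^'k^'m"
  assumes "rank H = CARD('k)"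
  shows "\<forall>x. H *v x = 0 \<longrightarrow> x = 0"
proof -
  have "vec.dim (rows H) = vec.dim (UNIV :: ('a^'k) set)"
    using assms unfolding row_rank_def_gen vec_dim_card by simp
  then have "vec.span (rows H) = UNIV"
    using vec.dim_eq_full[of "rows H"] vec.dim_UNIV vec.dimension_def by metis
  then show ?thesis
    using matrix_left_invertible_span_rows_gen[of H] matrix_left_invertible_ker[of H] by metis
qed

lemma exists_W:
  fixes H :: "complex^'k^'m"
  assumes card: "CARD('k) \<le> CARD('m)" and rk: "rank H = CARD('k)"
  shows "\<exists>(W::complex^'m^'m) (e::'k\<Rightarrow>'m). inj e \<and> (\<forall>x. W *v x = 0 \<longrightarrow> x = 0)
           \<and> (\<forall>i j. W$i$(e j) = H$i$j)"
proof -
  have injH: "\<And>x. H *v x = 0 \<Longrightarrow> x = 0" using rank_full_inj[OF rk] by blast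
  obtain e :: "'k \<Rightarrow> 'm" where e: "inj e"
    using card_le_inj[of "UNIV::'k set" "UNIV::'m set"] card by auto
  define h where "h j = column j H" for j
  have Hv: "H *v x = (\<Sum>j\<in>UNIV. x$j *s h j)" for x
    unfolding h_def by (rule matrix_mult_sum)
  have injh: "inj h"
  proof (rule injI)
    fix a b assume "h a = h b"
    then have "H *v (axis a 1 - axis b 1) = 0"
      by (simp add: Hv matrix_vector_mult_diff_distrib axis_def if_distrib[of "\<lambda>c. c *s _"]
          cong: if_cong) 
    then have "axis a 1 - axis b 1 = (0::complex^'k)" by (rule injH)
    then show "a = b" by (metis axis_eq_axis eq_iff_diff_eq_0 one_neq_zero)
  qed
  have indh: "vec.independent (range h)"
  proof
    assume "vec.dependent (range h)"
    then obtain u where u: "\<exists>v\<in>range h. u v \<noteq> 0" "(\<Sum>v\<in>range h. u v *s v) = 0"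
      by (auto simp: vec.dependent_finite)
    have "(\<Sum>v\<in>range h. u v *s v) = (\<Sum>j\<in>UNIV. u (h j) *s h j)"
      by (simp add: sum.reindex[OF injh])
    also have "\<dots> = H *v (\<chi> j. u (h j))" by (simp add: Hv)
    finally have "(\<chi> j. u (h j)) = 0" using u(2) injH by simp
    then show False using u(1) by (auto simp: vec_eq_iff)
  qed
  define B where "B = vec.extend_basis (range h)"
  have hB: "range h \<subseteq> B" and indB: "vec.independent B" and spB: "vec.span B = UNIV"
    unfolding B_def
    using vec.extend_basis_superset[OF indh] vec.independent_extend_basis[OF indh] vec.span_extend_basis[OF indh]
    by auto
  have finB: "finite B" using indB by (rule vec.finiteI_independent)
  have cardB: "card B = CARD('m)"
    using vec.basis_card_eq_dim[of B UNIV] indB spB vec_dim_card by auto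
  have c1: "card (B - range h) = CARD('m) - CARD('k)"
    using cardB hB finB by (simp add: card_Diff_subset card_image[OF injh])
  have c2: "card (UNIV - range e) = CARD('m) - CARD('k)"
    by (simp add: card_Diff_subset card_image[OF e])
  obtain g where g: "bij_betw g (UNIV - range e) (B - range h)"
    using finite_same_card_bij[of "UNIV - range e" "B - range h"] c1 c2 finB by auto
  define col where "col b = (if b \<in> range e then h (inv e b) else g b)" for b
  define W where "W = (\<chi> i b. col b $ i :: complex^'m^'m)"
  have colB: "range col \<subseteq> B"
    using hB g by (auto simp: col_def bij_betw_def)
  have injcol: "inj col"
  proof (rule injI)
    fix a b assume ab: "col a = col b"
    show "a = b"
    proof (cases "a \<in> range e"; cases "b \<in> range e")
      assume "a \<in> range e" "b \<in> range e"
      then show ?thesis using ab injh e by (auto simp: col_def inj_eq)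
    next
      assume "a \<in> range e" "b \<notin> range e"
      then have "col a \<in> range h" "col b \<notin> range h"
        using g by (auto simp: col_def bij_betw_def)
      then show ?thesis using ab by simp
    next
      assume "a \<notin> range e" "b \<in> range e"
      then have "col b \<in> range h" "col a \<notin> range h"
        using g by (auto simp: col_def bij_betw_def)
      then show ?thesis using ab by simp
    next
      assume "a \<notin> range e" "b \<notin> range e"
      then show ?thesis using ab g by (auto simp: col_def bij_betw_def inj_on_def)
    qed
  qed
  have Wv: "W *v x = (\<Sum>b\<in>UNIV. x$b *s col b)" for x
    by (simp add: W_def matrix_mult_sum column_def)
  have injW: "W *v x = 0 \<Longrightarrow> x = 0" for x
  proof -
    assume W0: "W *v x = 0"
    define u where "u v = x $ (inv col v)" for v
    have "(\<Sum>v\<in>range col. u v *s v) = (\<Sum>b\<in>UNIV. x$b *s col b)"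
      by (simp add: sum.reindex[OF injcol] u_def inv_f_f[OF injcol])
    then have s0: "(\<Sum>v\<in>range col. u v *s v) = 0" using W0 Wv by simp
    have "vec.independent (range col)" using indB colB by (rule vec.independent_mono)
    then have "\<forall>v\<in>range col. u v = 0"
      using s0 by (auto simp: vec.dependent_finite)
    then show "x = 0" by (auto simp: vec_eq_iff u_def inv_f_f[OF injcol])
  qed
  have "W$i$(e j) = H$i$j" for i j
    by (simp add: W_def col_def inv_f_f[OF e] h_def column_def)
  then show ?thesis using e injW by blast
qed



lemma asym:
  fixes H :: "complex^'k^'m"
  assumes card: "CARD('k) \<le> CARD('m)" and rk: "rank H = CARD('k)"
  shows "\<exists>L>0. ((\<lambda>c. Re (det (mat 1 + c *\<^sub>R (H ** cnj_transpose H))) / c ^ CARD('k)) \<longlongrightarrow> L) at_top"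
proof -
  obtain W :: "complex^'m^'m" and e :: "'k \<Rightarrow> 'm" where e: "inj e"
    and injW: "\<And>x. W *v x = 0 \<Longrightarrow> x = 0" and WH: "\<And>i j. W$i$(e j) = H$i$j"
    using exists_W[OF card rk] by blast
  define R where "R = cnj_transpose W ** W"
  define A where "A c = mat 1 + c *\<^sub>R (H ** cnj_transpose H)" for c :: real
  define T where "T c = ((\<chi> i j. mat 1 $ i $ j + (if i \<in> range e then complex_of_real c * R$i$j else 0)) :: complex^'m^'m)" for c :: real
  define N where "N t = ((\<chi> i j. if i \<in> range e then complex_of_real t * mat 1 $ i $ j + R$i$j else mat 1 $ i $ j) :: complex^'m^'m)" for t :: real
  have delta: "(\<Sum>l\<in>UNIV. (mat 1 $ i $ l :: complex) * X l) = X i" for i :: 'm and X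
  proof -
    have "(mat 1 $ i $ l :: complex) * X l = (if i = l then X l else 0)" for l by (simp add: mat_def)
    then show ?thesis by simp
  qed
  have delta2: "(\<Sum>l\<in>UNIV. X l * (mat 1 $ l $ j :: complex)) = X j" for j :: 'm and X
  proof -
    have "X l * (mat 1 $ l $ j :: complex) = (if l = j then X l else 0)" for l by (simp add: mat_def)
    then show ?thesis by simp
  qed
  have l: "(A c ** W)$i$j = W$i$j + of_real c * (\<Sum>a\<in>UNIV. H$i$a * (\<Sum>l\<in>UNIV. cnj (H$l$a) * W$l$j))" for c i j
  proof -
    have "(A c ** W)$i$j = (\<Sum>l\<in>UNIV. (mat 1 $ i $ l + of_real c * (\<Sum>a\<in>UNIV. H$i$a * cnj (H$l$a))) * W$l$j)"
      unfolding A_def matrix_matrix_mult_def cnj_transpose_def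
      by (simp add: vector_add_component vector_scaleR_component, simp add: scaleR_conv_of_real)
    also have "\<dots> = W$i$j + of_real c * (\<Sum>l\<in>UNIV. \<Sum>a\<in>UNIV. H$i$a * cnj (H$l$a) * W$l$j)"
      by (simp add: distrib_right sum.distrib delta sum_distrib_left sum_distrib_right mult.assoc)
    also have "(\<Sum>l\<in>UNIV. \<Sum>a\<in>UNIV. H$i$a * cnj (H$l$a) * W$l$j) = (\<Sum>a\<in>UNIV. H$i$a * (\<Sum>l\<in>UNIV. cnj (H$l$a) * W$l$j))"
      by (subst sum.swap) (simp add: sum_distrib_left mult.assoc)
    finally show ?thesis .
  qed
  have r: "(W ** T c)$i$j = W$i$j + of_real c * (\<Sum>a\<in>UNIV. H$i$a * (\<Sum>l\<in>UNIV. cnj (H$l$a) * W$l$j))" for c i j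
  proof -
    have "(W ** T c)$i$j = (\<Sum>b\<in>UNIV. W$i$b * (mat 1 $ b $ j + (if b \<in> range e then complex_of_real c * R$b$j else 0)))"
      unfolding T_def matrix_matrix_mult_def by simp
    also have "\<dots> = (\<Sum>b\<in>UNIV. W$i$b * mat 1 $ b $ j) + (\<Sum>b\<in>UNIV. W$i$b * (if b \<in> range e then complex_of_real c * R$b$j else 0))"
      by (simp only: distrib_left sum.distrib)
    also have "\<dots> = W$i$j + of_real c * (\<Sum>b\<in>UNIV. if b \<in> range e then W$i$b * R$b$j else 0)"
      unfolding delta2 sum_distrib_left by (intro arg_cong2[where f="(+)"] refl sum.cong) auto
    also have "(\<Sum>b\<in>UNIV. if b \<in> range e then W$i$b * R$b$j else 0) = (\<Sum>b\<in>range e. W$i$b * R$b$j)"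
      by (simp add: sum.If_cases)
    also have "\<dots> = (\<Sum>a\<in>UNIV. W$i$(e a) * R$(e a)$j)"
      by (simp add: sum.reindex[OF e])
    also have "\<dots> = (\<Sum>a\<in>UNIV. H$i$a * (\<Sum>l\<in>UNIV. cnj (H$l$a) * W$l$j))"
      by (simp add: R_def matrix_matrix_mult_def cnj_transpose_def WH)
    finally show ?thesis .
  qed
  have AW: "A c ** W = W ** T c" for c
    by (simp add: vec_eq_iff l r)
  have dW: "det W \<noteq> 0" by (rule det_ne0_of_inj) (rule injW)
  have AT: "det (A c) = det (T c)" for c
    using arg_cong[OF AW[of c], of det] dW by (simp add: det_mul)
  have TN: "det (T c) = complex_of_real c ^ CARD('k) * det (N (inverse c))" if c: "c > 0" for c
  proof -
    define s where "s i = (if i \<in> range e then complex_of_real c else 1)" for i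
    have "T c = (\<chi> i. s i *s (N (inverse c) $ i))"
      using c by (simp add: vec_eq_iff T_def N_def s_def mat_def field_simps)
    then have "det (T c) = prod s UNIV * det (\<chi> i. N (inverse c) $ i)"
      by (simp add: det_rows_mul)
    moreover have "prod s UNIV = complex_of_real c ^ CARD('k)"
      unfolding s_def by (simp add: prod.If_cases card_image[OF e])
    ultimately show ?thesis by simp
  qed
  have inv0: "((\<lambda>c::real. complex_of_real (inverse c)) \<longlongrightarrow> 0) at_top"
    using tendsto_of_real[OF tendsto_inverse_0_at_top[OF filterlim_ident], where 'a=complex]
    by (simp only: of_real_0)
  have inv0': "((\<lambda>c::real. inverse (complex_of_real c)) \<longlongrightarrow> 0) at_top"
    using inv0 by (simp only: of_real_inverse)
  have lim: "((\<lambda>c. det (N (inverse c))) \<longlongrightarrow> det (N 0)) at_top"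
  proof (rule det_tendsto)
    fix i j
    show "((\<lambda>c. N (inverse c) $ i $ j) \<longlongrightarrow> N 0 $ i $ j) at_top"
    proof (cases "i \<in> range e")
      case True
      have "((\<lambda>c. complex_of_real (inverse c) * mat 1 $ i $ j + R$i$j) \<longlongrightarrow> 0 * mat 1 $ i $ j + R$i$j) at_top"
        by (intro tendsto_add tendsto_mult inv0 tendsto_const)
      then show ?thesis using True by (simp add: N_def)
    next
      case False then show ?thesis by (simp add: N_def)
    qed
  qed
  have dN0: "det (N 0) \<noteq> 0"
  proof (rule det_ne0_of_inj)
    fix x assume x: "N 0 *v x = 0"
    have "(N 0 *v x) $ i = (if i \<in> range e then (R *v x) $ i else x $ i)" for i
      by (simp add: N_def matrix_vector_mult_def delta)
    then have xi: "(if i \<in> range e then (R *v x) $ i else x $ i) = 0" for i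
      using x by (metis zero_index)
    have "(\<Sum>i\<in>UNIV. cnj (x$i) * (R *v x)$i) = 0"
      by (rule sum.neutral) (metis xi complex_cnj_zero mult_zero_left mult_zero_right)
    then have "complex_of_real (nsq (W *v x)) = 0"
      unfolding R_def quad_form nsq_eq .
    then have "W *v x = 0" by (intro nsq_zero) simp
    then show "x = 0" by (rule injW)
  qed
  define L where "L = Re (det (N 0))"
  have ev: "eventually (\<lambda>c. Re (det (A c)) / c ^ CARD('k) = Re (det (N (inverse c)))) at_top"
    using eventually_gt_at_top[of 0]
    by eventually_elim (simp add: AT TN)
  have ev2: "eventually (\<lambda>c. Im (det (N (inverse c))) = 0) at_top"
    using eventually_gt_at_top[of 0]
  proof eventually_elim
    case (elim c)
    have "Im (det (A c)) = 0" unfolding A_def by (rule det_IplusHH_real)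
    then show ?case using elim by (simp add: AT TN)
  qed
  have ev3: "eventually (\<lambda>c. 0 < Re (det (N (inverse c)))) at_top"
    using ev eventually_gt_at_top[of 0]
  proof eventually_elim
    case (elim c)
    have "0 < Re (det (A c))" unfolding A_def by (rule det_IplusHH_pos) (use elim in simp)
    then have "0 < Re (det (A c)) / c ^ CARD('k)" by (rule divide_pos_pos) (use elim in auto)
    then show ?case using elim by simp
  qed
  have limRe: "((\<lambda>c. Re (det (N (inverse c)))) \<longlongrightarrow> L) at_top"
    unfolding L_def by (intro tendsto_intros lim)
  have limIm: "((\<lambda>c. Im (det (N (inverse c)))) \<longlongrightarrow> Im (det (N 0))) at_top"
    by (intro tendsto_intros lim)
  have "((\<lambda>c. Im (det (N (inverse c)))) \<longlongrightarrow> 0) at_top"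
    using ev2 by (simp add: tendsto_eventually)
  then have Im0: "Im (det (N 0)) = 0"
    using limIm tendsto_unique[of at_top] by (metis trivial_limit_at_top_linorder)
  have "L \<ge> 0"
    using limRe ev3 by (intro tendsto_lowerbound) (auto elim: eventually_mono)
  moreover have "L \<noteq> 0" using dN0 Im0 unfolding L_def by (simp add: complex_eq_iff)
  ultimately have Lpos: "L > 0" by simp
  have "((\<lambda>c. Re (det (A c)) / c ^ CARD('k)) \<longlongrightarrow> L) at_top"
    using tendsto_cong[OF ev] limRe by simp
  then show ?thesis using Lpos unfolding A_def by blast
qed



lemma log2det_split:
  fixes H :: "complex^'k^'m"
  assumes c: "c > 0"
  shows "log2det c H = log 2 (Re (det (mat 1 + c *\<^sub>R (H ** cnj_transpose H))) / c ^ CARD('k))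
           + real CARD('k) * log 2 c"
proof -
  let ?d = "Re (det (mat 1 + c *\<^sub>R (H ** cnj_transpose H)))"
  have d: "?d > 0" using c by (intro det_IplusHH_pos) simp
  have "?d = (?d / c ^ CARD('k)) * c ^ CARD('k)" using c by simp
  then have "log 2 ?d = log 2 (?d / c ^ CARD('k)) + log 2 (c ^ CARD('k))"
    using c d by (metis divide_pos_pos log_mult zero_less_power less_irrefl)
  then show ?thesis unfolding log2det_def using c by (simp add: log_nat_power)
qed

lemma filterlim_const_mult_at_top:
  fixes k :: real
  assumes "k > 0"
  shows "filterlim (\<lambda>x. k * x) at_top at_top"
  by (rule filterlim_tendsto_pos_mult_at_top[OF tendsto_const assms filterlim_ident])

theorem corollary1:
  fixes H :: "nat \<Rightarrow> complex^'k^'m" and S :: nat and \<sigma>2 EVM :: real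
  assumes "CARD('k) \<le> CARD('m)"
    and "S \<ge> 1"
    and "\<sigma>2 > 0"
    and "0 < EVM" and "EVM \<le> 1"
    and "\<forall>\<nu><S. rank (H \<nu>) = CARD('k)"
  shows "((\<lambda>\<rho>. sum_rate H S \<sigma>2 EVM \<rho>) \<longlongrightarrow> real CARD('k) * log 2 (1 / EVM\<^sup>2)) at_top"
proof -
  let ?K = "real CARD('k)"
  define \<phi> where "\<phi> \<nu> c = Re (det (mat 1 + c *\<^sub>R (H \<nu> ** cnj_transpose (H \<nu>)))) / c ^ CARD('k)" for \<nu> c
  define e2 where "e2 = EVM\<^sup>2"
  have e2: "e2 > 0" using assms(4) by (simp add: e2_def)
  have sig: "\<sigma>2 > 0" by (rule assms(3))
  have "\<forall>\<nu>. \<exists>L. \<nu> < S \<longrightarrow> L > 0 \<and> (\<phi> \<nu> \<longlongrightarrow> L) at_top"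
  proof
    fix \<nu>
    show "\<exists>L. \<nu> < S \<longrightarrow> L > 0 \<and> (\<phi> \<nu> \<longlongrightarrow> L) at_top"
    proof (cases "\<nu> < S")
      case True
      then have "rank (H \<nu>) = CARD('k)" using assms(6) by blast
      from asym[OF assms(1) this] show ?thesis unfolding \<phi>_def by blast
    qed simp
  qed
  then obtain L where L: "\<And>\<nu>. \<nu> < S \<Longrightarrow> L \<nu> > 0" "\<And>\<nu>. \<nu> < S \<Longrightarrow> (\<phi> \<nu> \<longlongrightarrow> L \<nu>) at_top"
    by metis
  define F where "F \<rho> = (1 / real S) * (\<Sum>\<nu><S. log 2 (\<phi> \<nu> ((1/\<sigma>2) * \<rho>)))
      - (1 / real S) * (\<Sum>\<nu><S. log 2 (\<phi> \<nu> ((e2/\<sigma>2) * \<rho>))) + ?K * log 2 (1 / e2)" for \<rho>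
  have Spos: "real S > 0" using assms(2) by simp
  have eq: "eventually (\<lambda>\<rho>. F \<rho> = sum_rate H S \<sigma>2 EVM \<rho>) at_top"
    using eventually_gt_at_top[of 0]
  proof eventually_elim
    case (elim \<rho>)
    define a where "a = \<rho> / \<sigma>2"
    define b where "b = \<rho> * EVM\<^sup>2 / \<sigma>2"
    have a: "a > 0" using elim sig by (simp add: a_def)
    have b: "b > 0" using elim sig assms(4) by (simp add: b_def)
    have a': "(1/\<sigma>2) * \<rho> = a" by (simp add: a_def)
    have b': "(e2/\<sigma>2) * \<rho> = b" by (simp add: b_def e2_def)
    have ab: "log 2 a - log 2 b = log 2 (1 / e2)"
    proof -
      have "a / b = 1 / e2" using elim sig e2 by (simp add: a_def b_def e2_def field_simps)
      then show ?thesis using a b by (metis log_divide less_irrefl)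
    qed
    have sa: "(\<Sum>\<nu><S. log2det a (H \<nu>)) = (\<Sum>\<nu><S. log 2 (\<phi> \<nu> a)) + real S * (?K * log 2 a)"
      using a by (simp add: log2det_split \<phi>_def sum.distrib)
    have sb: "(\<Sum>\<nu><S. log2det b (H \<nu>)) = (\<Sum>\<nu><S. log 2 (\<phi> \<nu> b)) + real S * (?K * log 2 b)"
      using b by (simp add: log2det_split \<phi>_def sum.distrib)
    have "sum_rate H S \<sigma>2 EVM \<rho> = (1 / real S) * (\<Sum>\<nu><S. log2det a (H \<nu>)) - (1 / real S) * (\<Sum>\<nu><S. log2det b (H \<nu>))"
      by (simp add: sum_rate_def a_def b_def)
    also have "\<dots> = (1 / real S) * (\<Sum>\<nu><S. log 2 (\<phi> \<nu> a)) - (1 / real S) * (\<Sum>\<nu><S. log 2 (\<phi> \<nu> b))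
        + ?K * (log 2 a - log 2 b)"
      unfolding sa sb using Spos by (simp add: field_simps)
    also have "\<dots> = F \<rho>" unfolding F_def a' b' ab ..
    finally show ?case by simp
  qed
  have lim1: "((\<lambda>\<rho>. log 2 (\<phi> \<nu> (k * \<rho>))) \<longlongrightarrow> log 2 (L \<nu>)) at_top" if "\<nu> < S" "k > 0" for \<nu> k
  proof -
    have "((\<lambda>\<rho>. \<phi> \<nu> (k * \<rho>)) \<longlongrightarrow> L \<nu>) at_top"
      using filterlim_compose[OF L(2)[OF that(1)] filterlim_const_mult_at_top[OF that(2)]] .
    then show ?thesis using L(1)[OF that(1)] by (intro tendsto_intros) auto
  qed
  have "(F \<longlongrightarrow> (1 / real S) * (\<Sum>\<nu><S. log 2 (L \<nu>)) - (1 / real S) * (\<Sum>\<nu><S. log 2 (L \<nu>)) + ?K * log 2 (1 / e2)) at_top"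
    unfolding F_def using sig e2
    by (intro tendsto_intros tendsto_sum lim1) auto
  then have "(F \<longlongrightarrow> ?K * log 2 (1 / EVM\<^sup>2)) at_top" by (simp add: e2_def)
  then show ?thesis using tendsto_cong[OF eq] by simp
qed


end
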